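(* Let $f\colon 2^{\mathcal{N}}\to\mathbb{R}$ be non-negative and submodular, $|\mathcal{N}|=n$, $k$ a positive integer, $\varepsilon>0$, and let $S\subseteq\mathcal{N}$ with $|S|=k$. Assume $\mathcal{N}\setminus S$ contains a dummy element $d$ (i.e., $f(A\cup\{d\})=f(A)$ for all $A\subseteq\mathcal{N}$). Suppose there exist an integer $1\le t\le k$ and sets $T_+\subseteq\mathcal{N}\setminus S$, $T_-\subseteq S$ with $|T_+|=|T_-|=t$ and \[ \sum_{u\in T_+} f(u\mid S)\ >\ \sum_{v\in T_-} f(v\mid S-v)+\varepsilon f(S). \] Let $Z$ be a uniformly random subset of $\mathcal{N}$ of size $\lceil n/k\rceil$. Let $u$ be an element of $Z\setminus S$ maximizing $f(u\mid S)$, except that $u:=d$ if $Z\setminus S=\emptyset$ or $\max_{u'\in Z\setminus S}f(u'\mid S)\le 0$. Let $v\in\arg\min_{v'\in S} f(v'\mid S-v')$. Define $S'=S-v+u$ if $f(S-v+u)>f(S)$, and $S'=S$ otherwise. Then \[ \mathbb{E}\big[f(S')-f(S)\big]\ \ge\ \frac{(1-1/e)\,\varepsilon}{k}\, f(S). \]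
   Context: Notation: $f(u\mid A)=f(A\cup\{u\})-f(A)$; $S-v=S\setminus\{v\}$, $S+u=S\cup\{u\}$. Submodularity: $f(A\cup\{s\})-f(A)\ge f(B\cup\{s\})-f(B)$ for all $A\subseteq B\subseteq\mathcal{N}$, $s\notin B$. *)

theory Defs
  imports "HOL-Probability.Probability"
begin

definition marg :: "('a set \<Rightarrow> real) \<Rightarrow> 'a \<Rightarrow> 'a set \<Rightarrow> real" where
  "marg f u A = f (insert u A) - f A"

definition submodular_on :: "'a set \<Rightarrow> ('a set \<Rightarrow> real) \<Rightarrow> bool" where
  "submodular_on N f \<longleftrightarrow>
     (\<forall>A B s. A \<subseteq> B \<and> B \<subseteq> N \<and> s \<in> N \<and> s \<notin> B \<longrightarrow>
        f (A \<union> {s}) - f A \<ge> f (B \<union> {s}) - f B)"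

definition swap_step :: "('a set \<Rightarrow> real) \<Rightarrow> 'a set \<Rightarrow> 'a \<Rightarrow> 'a \<Rightarrow> 'a set" where
  "swap_step f S v u =
     (if f (insert u (S - {v})) > f S then insert u (S - {v}) else S)"

end

theory Submission
  imports Defs
begin

lemma binom_ratio:
  fixes n s i :: nat
  assumes "i \<le> n" "s \<le> n" "0 < n"
  shows "real ((n - i) choose s) \<le> ((real n - real s) / real n) ^ i * real (n choose s)"
  using assms(1)
proof (induction i)
  case 0 then show ?case by simp
next
  case (Suc i)
  define m where "m = n - i"
  have m1: "m \<ge> 1" and mn: "m \<le> n" using Suc.prems unfolding m_def by auto
  have eq: "n - Suc i = m - 1" unfolding m_def by simp
  have absorb: "real m * real ((m - 1) choose s) = real (m - s) * real (m choose s)"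
    using binomial_absorb_comp[of m s] by (metis of_nat_mult)
  have q: "real (m - s) / real m \<le> (real n - real s) / real n"
  proof (cases "s \<le> m")
    case True
    then have "real (m-s)/real m = 1 - real s / real m" using m1 by (simp add: of_nat_diff field_simps)
    moreover have "real s / real n \<le> real s / real m" using m1 mn by (simp add: frac_le)
    moreover have "(real n - real s)/real n = 1 - real s / real n" using assms by (simp add: field_simps)
    ultimately show ?thesis by linarith
  next
    case False
    then have "m - s = 0" by simp
    then show ?thesis using assms by simp
  qed
  have "real ((m-1) choose s) = real (m - s) / real m * real (m choose s)"
    using absorb m1 by (simp add: field_simps)
  also have "\<dots> \<le> (real n - real s) / real n * real (m choose s)"
    by (rule mult_right_mono[OF q]) simp
  also have "\<dots> \<le> (real n - real s) / real n * (((real n - real s) / real n) ^ i * real (n choose s))"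
    apply (rule mult_left_mono) using Suc.IH Suc.prems m_def apply simp using assms by simp
  finally show ?case using eq by simp
qed

lemma pow_concave:
  fixes a :: real and i m :: nat
  assumes "0 \<le> a" "a \<le> 1" "i \<le> m"
  shows "real i * (1 - a^m) \<le> real m * (1 - a^i)"
  using assms(3)
proof (induction m rule: dec_induct)
  case base show ?case by simp
next
  case (step m)
  have key: "real i * a^m * (1 - a) \<le> 1 - a^i"
  proof -
    have e: "1 - a^i = (1-a) * (\<Sum>j<i. a^j)" by (rule one_diff_power_eq)
    have "(\<Sum>j<i. a^m) \<le> (\<Sum>j<i. a^j)"
      by (rule sum_mono) (use step assms in \<open>auto intro: power_decreasing\<close>)
    then have "real i * a^m \<le> (\<Sum>j<i. a^j)" by simp
    then have "real i * a^m * (1 - a) \<le> (\<Sum>j<i. a^j) * (1-a)"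
      by (rule mult_right_mono) (use assms in auto)
    then show ?thesis using e by (simp add: mult.commute)
  qed
  have "real i * (1 - a^Suc m) = real i * (1 - a^m) + real i * a^m * (1-a)" by (simp add: algebra_simps)
  also have "\<dots> \<le> real m * (1-a^i) + (1 - a^i)" using step.IH key by linarith
  finally show ?case by (simp add: algebra_simps)
qed

lemma exp_bound:
  fixes k :: nat assumes "k \<ge> 1"
  shows "(1 - 1 / real k) ^ k \<le> 1 / exp 1"
proof -
  have "1 - 1 / real k \<le> exp (- (1 / real k))" using exp_ge_add_one_self[of "- (1/real k)"] by simp
  moreover have "0 \<le> 1 - 1 / real k" using assms by simp
  ultimately have "(1 - 1 / real k) ^ k \<le> exp (- (1 / real k)) ^ k" by (rule power_mono)
  also have "\<dots> = exp (real k * (- (1 / real k)))" by (rule exp_of_nat_mult[symmetric])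
  also have "\<dots> = exp (-1)" using assms by simp
  finally show ?thesis by (simp add: exp_minus inverse_eq_divide)
qed

lemma hit_bound:
  fixes k i :: nat assumes "k \<ge> 1" "i \<le> k"
  shows "(1 - 1 / exp 1) * real i / real k \<le> 1 - (1 - 1 / real k) ^ i"
proof -
  let ?a = "1 - 1 / real k"
  have a: "0 \<le> ?a" "?a \<le> 1" using assms by auto
  have c: "real i * (1 - ?a^k) \<le> real k * (1 - ?a^i)" by (rule pow_concave[OF a assms(2)])
  have "real i * (1 - 1/exp 1) \<le> real i * (1 - ?a^k)"
    using exp_bound[OF assms(1)] by (intro mult_left_mono) auto
  with c have "real i * (1 - 1/exp 1) \<le> real k * (1 - ?a^i)" by linarith
  then show ?thesis using assms by (simp add: field_simps)
qed

lemma sum_indicator_card: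
  "finite F \<Longrightarrow> (\<Sum>Z\<in>F. (if P Z then 1 else 0 :: real)) = real (card {Z\<in>F. P Z})"
  by (simp add: sum.If_cases Int_def conj_commute)

lemma maxsum:
  fixes F :: "'a set set" and T :: "'a set" and g :: "'a \<Rightarrow> real" and \<alpha> :: real
  assumes finF: "finite F" and finT: "finite T"
    and hit: "\<forall>A \<subseteq> T. \<alpha> * real (card A) * real (card F) \<le> real (card {Z\<in>F. Z \<inter> A \<noteq> {}})"
    and gnn: "\<forall>x\<in>T. 0 \<le> g x"
  shows "\<alpha> * real (card F) * (\<Sum>x\<in>T. g x) \<le> (\<Sum>Z\<in>F. Max (insert 0 (g ` (Z \<inter> T))))"
  using finT hit gnn
proof (induction T arbitrary: g rule: finite_psubset_induct)
  case (psubset T)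
  show ?case
  proof (cases "T = {}")
    case True then show ?thesis by simp
  next
    case False
    define m0 where "m0 = Min (g ` T)"
    have "m0 \<in> g ` T" unfolding m0_def using psubset.hyps False by (intro Min_in) auto
    then obtain u0 where u0: "u0 \<in> T" "g u0 = m0" by auto
    have m0le: "\<forall>x\<in>T. m0 \<le> g x" using psubset.hyps m0_def by auto
    have m0nn: "0 \<le> m0" using u0 psubset.prems by auto
    define T' where "T' = T - {u0}"
    define g' where "g' = (\<lambda>x. g x - m0)"
    have IH: "\<alpha> * real (card F) * (\<Sum>x\<in>T'. g' x) \<le> (\<Sum>Z\<in>F. Max (insert 0 (g' ` (Z \<inter> T'))))"
      apply (rule psubset.IH) using u0 psubset.prems m0le unfolding T'_def g'_def by auto
    have pw: "m0 * (if Z \<inter> T \<noteq> {} then 1 else 0) + Max (insert 0 (g' ` (Z \<inter> T')))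
              \<le> Max (insert 0 (g ` (Z \<inter> T)))" for Z
    proof -
      have fin1: "finite (Z \<inter> T)" "finite (Z\<inter>T')" using psubset.hyps T'_def by auto
      show ?thesis
      proof (cases "Z \<inter> T' = {}")
        case True
        then have "Max (insert 0 (g' ` (Z \<inter> T'))) = 0" by simp
        moreover have "m0 * (if Z \<inter> T \<noteq> {} then 1 else 0) \<le> Max (insert 0 (g ` (Z \<inter> T)))"
        proof (cases "Z \<inter> T = {}")
          case True then show ?thesis by simp
        next
          case False
          then obtain x where x: "x \<in> Z \<inter> T" by auto
          then have "g x \<le> Max (insert 0 (g ` (Z \<inter> T)))" using fin1 by (intro Max_ge) auto
          then show ?thesis using m0le x False by auto
        qed
        ultimately show ?thesis by linarith
      next
        case False
        then obtain x where x: "x \<in> Z \<inter> T'" by auto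
        have xT: "x \<in> Z \<inter> T" using x T'_def by auto
        then have gx: "g x \<le> Max (insert 0 (g ` (Z \<inter> T)))" using fin1 by (intro Max_ge) auto
        have "Max (insert 0 (g' ` (Z \<inter> T'))) \<le> Max (insert 0 (g ` (Z \<inter> T))) - m0"
        proof (subst Max_le_iff)
          show "finite (insert 0 (g' ` (Z \<inter> T')))" using fin1 by auto
          show "insert 0 (g' ` (Z \<inter> T')) \<noteq> {}" by auto
          show "\<forall>a\<in>insert 0 (g' ` (Z \<inter> T')). a \<le> Max (insert 0 (g ` (Z \<inter> T))) - m0"
          proof
            fix a assume "a \<in> insert 0 (g' ` (Z \<inter> T'))"
            then consider "a = 0" | y where "y \<in> Z \<inter> T'" "a = g y - m0" unfolding g'_def by auto
            then show "a \<le> Max (insert 0 (g ` (Z \<inter> T))) - m0"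
            proof cases
              case 1 then show ?thesis using gx m0le xT by force
            next
              case 2
              then have "y \<in> Z \<inter> T" using T'_def by auto
              then have "g y \<le> Max (insert 0 (g ` (Z \<inter> T)))" using fin1 by (intro Max_ge) auto
              then show ?thesis using 2 by simp
            qed
          qed
        qed
        then show ?thesis using xT by auto
      qed
    qed
    have h1: "(\<Sum>Z\<in>F. m0 * (if Z \<inter> T \<noteq> {} then 1 else 0) + Max (insert 0 (g' ` (Z \<inter> T'))))
          \<le> (\<Sum>Z\<in>F. Max (insert 0 (g ` (Z \<inter> T))))"
      by (rule sum_mono) (rule pw)
    have h2: "(\<Sum>Z\<in>F. m0 * (if Z \<inter> T \<noteq> {} then 1 else 0) + Max (insert 0 (g' ` (Z \<inter> T'))))
        = m0 * real (card {Z\<in>F. Z \<inter> T \<noteq> {}}) + (\<Sum>Z\<in>F. Max (insert 0 (g' ` (Z \<inter> T'))))"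
      by (simp add: sum.distrib sum_distrib_left[symmetric] sum_indicator_card[OF finF])
    have h3: "m0 * (\<alpha> * real (card T) * real (card F)) \<le> m0 * real (card {Z\<in>F. Z \<inter> T \<noteq> {}})"
      using psubset.prems(1) m0nn by (intro mult_left_mono) auto
    have h4: "(\<Sum>x\<in>T'. g' x) = (\<Sum>x\<in>T'. g x) - real (card T') * m0"
      unfolding g'_def by (simp add: sum_subtractf)
    have h5: "(\<Sum>x\<in>T. g x) = m0 + (\<Sum>x\<in>T'. g x)"
      unfolding T'_def using u0 psubset.hyps by (simp add: sum.remove)
    have h6: "real (card T') = real (card T) - 1"
    proof -
      have "card T > 0" using u0 psubset.hyps by (auto simp: card_gt_0_iff)
      then show ?thesis unfolding T'_def using u0 psubset.hyps by (simp add: of_nat_diff)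
    qed
    define c where "c = \<alpha> * real (card F)"
    have e1: "c * (\<Sum>x\<in>T'. g' x) = c * (\<Sum>x\<in>T'. g x) - m0 * (c * real (card T)) + c * m0"
    proof -
      have "(\<Sum>x\<in>T'. g' x) = (\<Sum>x\<in>T'. g x) - m0 * real (card T) + m0"
        using h4 h6 by (simp add: algebra_simps)
      then have "c * (\<Sum>x\<in>T'. g' x) = c * ((\<Sum>x\<in>T'. g x) - m0 * real (card T) + m0)" by simp
      also have "\<dots> = c * (\<Sum>x\<in>T'. g x) - m0 * (c * real (card T)) + c * m0"
        by (simp add: algebra_simps)
      finally show ?thesis .
    qed
    have e2: "m0 * (\<alpha> * real (card T) * real (card F)) = m0 * (c * real (card T))"
      unfolding c_def by (simp add: algebra_simps)
    have e3: "c * (\<Sum>x\<in>T. g x) = c * m0 + c * (\<Sum>x\<in>T'. g x)" using h5 by (simp add: algebra_simps)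
    have "c * (\<Sum>x\<in>T. g x) \<le> (\<Sum>Z\<in>F. Max (insert 0 (g ` (Z \<inter> T))))"
      using h1 h2 h3 e1 e2 e3 IH unfolding c_def[symmetric] by linarith
    then show ?thesis unfolding c_def .
  qed
qed

theorem mainTheorem4:
  fixes N :: "'a set" and f :: "'a set \<Rightarrow> real" and n k t :: nat and \<epsilon> :: real
    and S Tp Tm :: "'a set" and d v :: 'a and U :: "'a set \<Rightarrow> 'a"
  assumes finN: "finite N" and n_def: "card N = n"
    and nonneg: "\<forall>A. A \<subseteq> N \<longrightarrow> f A \<ge> 0"
    and submod: "submodular_on N f"
    and kpos: "k \<ge> 1" and eps: "\<epsilon> > 0"
    and SN: "S \<subseteq> N" and cardS: "card S = k"
    and dN: "d \<in> N - S" and dummy: "\<forall>A. A \<subseteq> N \<longrightarrow> f (A \<union> {d}) = f A"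
    and t: "1 \<le> t" "t \<le> k"
    and Tp: "Tp \<subseteq> N - S" "card Tp = t"
    and Tm: "Tm \<subseteq> S" "card Tm = t"
    and gap: "(\<Sum>u\<in>Tp. marg f u S) > (\<Sum>w\<in>Tm. marg f w (S - {w})) + \<epsilon> * f S"
    and U_choice: "\<forall>Z. Z \<subseteq> N \<and> card Z = nat \<lceil>real n / real k\<rceil> \<longrightarrow>
        ((Z - S = {} \<or> Max ((\<lambda>x. marg f x S) ` (Z - S)) \<le> 0) \<longrightarrow> U Z = d) \<and>
        (\<not> (Z - S = {} \<or> Max ((\<lambda>x. marg f x S) ` (Z - S)) \<le> 0) \<longrightarrow>
           U Z \<in> Z - S \<and> (\<forall>x\<in>Z - S. marg f x S \<le> marg f (U Z) S))"
    and v_choice: "v \<in> S" "\<forall>w\<in>S. marg f v (S - {v}) \<le> marg f w (S - {w})"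
  shows "measure_pmf.expectation
           (pmf_of_set {Z. Z \<subseteq> N \<and> card Z = nat \<lceil>real n / real k\<rceil>})
           (\<lambda>Z. f (swap_step f S v (U Z)) - f S)
         \<ge> (1 - 1 / exp 1) * \<epsilon> / real k * f S"
proof -
  define s where "s = nat \<lceil>real n / real k\<rceil>"
  define F where "F = {Z. Z \<subseteq> N \<and> card Z = s}"
  define m where "m = marg f v (S - {v})"
  define g where "g = (\<lambda>u. max 0 (marg f u S - m))"
  define gain where "gain = (\<lambda>Z. f (swap_step f S v (U Z)) - f S)"
  define \<alpha> where "\<alpha> = (1 - 1 / exp 1) / real k"
  have "card N > 0" using finN dN by (auto simp: card_gt_0_iff)
  then have n1: "n \<ge> 1" using n_def by simp
  have "real n \<le> real n * real k" using mult_left_mono[of 1 "real k" "real n"] kpos by simp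
  then have s_le: "s \<le> n" unfolding s_def using kpos
    by (simp add: nat_le_iff ceiling_le_iff divide_le_eq)
  have s_ge: "real n / real k \<le> real s" unfolding s_def by linarith
  have "F \<subseteq> Pow N" unfolding F_def by auto
  then have finF: "finite F" using finN by (metis finite_Pow_iff finite_subset)
  have cardF: "card F = n choose s" unfolding F_def using n_subsets[OF finN] n_def by simp
  have Fne: "F \<noteq> {}" proof
    assume "F = {}" then have "card F = 0" by simp
    then show False using cardF s_le by simp
  qed
  have sm: "\<And>A B s. A \<subseteq> B \<Longrightarrow> B \<subseteq> N \<Longrightarrow> s \<in> N \<Longrightarrow> s \<notin> B \<Longrightarrow>
      f (B \<union> {s}) - f B \<le> f (A \<union> {s}) - f A"
    using submod unfolding submodular_on_def by blast
  have fS: "f S \<ge> 0" using nonneg SN by auto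
  have alpha_nn: "\<alpha> \<ge> 0" unfolding \<alpha>_def by (simp add: divide_le_eq)
  have Tmm: "real t * m \<le> (\<Sum>w\<in>Tm. marg f w (S - {w}))"
  proof -
    have "(\<Sum>w\<in>Tm. m) \<le> (\<Sum>w\<in>Tm. marg f w (S - {w}))"
      by (rule sum_mono) (use v_choice Tm m_def in auto)
    then show ?thesis using Tm by simp
  qed
  have finTp: "finite Tp" using Tp finN finite_subset by blast
  have "(\<Sum>u\<in>Tp. marg f u S - m) \<le> (\<Sum>u\<in>Tp. g u)" by (rule sum_mono) (simp add: g_def)
  moreover have "(\<Sum>u\<in>Tp. marg f u S - m) = (\<Sum>u\<in>Tp. marg f u S) - real t * m"
    using Tp by (simp add: sum_subtractf)
  ultimately have gsum: "\<epsilon> * f S \<le> (\<Sum>u\<in>Tp. g u)" using gap Tmm by linarith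
  have hit: "\<forall>A \<subseteq> Tp. \<alpha> * real (card A) * real (card F) \<le> real (card {Z\<in>F. Z \<inter> A \<noteq> {}})"
  proof (intro allI impI)
    fix A assume A: "A \<subseteq> Tp"
    define i where "i = card A"
    have AN: "A \<subseteq> N" using A Tp by auto
    have ik: "i \<le> k" using card_mono[OF finTp A] Tp t i_def by simp
    have i_n: "i \<le> n" using card_mono[OF finN AN] n_def i_def by simp
    have miss: "{Z\<in>F. \<not> Z \<inter> A \<noteq> {}} = {Z. Z \<subseteq> N - A \<and> card Z = s}" unfolding F_def by auto
    have cmiss: "card {Z\<in>F. \<not> Z \<inter> A \<noteq> {}} = (n - i) choose s"
      unfolding miss using n_subsets[of "N - A" s] finN AN n_def i_def
      by (simp add: card_Diff_subset finite_subset)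
    have split: "card F = card {Z\<in>F. Z \<inter> A \<noteq> {}} + card {Z\<in>F. \<not> Z \<inter> A \<noteq> {}}"
    proof -
      have "F = {Z\<in>F. Z \<inter> A \<noteq> {}} \<union> {Z\<in>F. \<not> Z \<inter> A \<noteq> {}}" by auto
      then have "card F = card ({Z\<in>F. Z \<inter> A \<noteq> {}} \<union> {Z\<in>F. \<not> Z \<inter> A \<noteq> {}})" by (rule arg_cong)
      moreover have "card ({Z\<in>F. Z \<inter> A \<noteq> {}} \<union> {Z\<in>F. \<not> Z \<inter> A \<noteq> {}}) = card {Z\<in>F. Z \<inter> A \<noteq> {}} + card {Z\<in>F. \<not> Z \<inter> A \<noteq> {}}"
        using finF by (intro card_Un_disjoint) auto
      ultimately show ?thesis by linarith
    qed
    define q where "q = (real n - real s) / real n"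
    have q0: "0 \<le> q" unfolding q_def using s_le by simp
    have q1: "q \<le> 1 - 1 / real k"
    proof -
      have "real n / real k / real n \<le> real s / real n" using s_ge n1 by (intro divide_right_mono) auto
      moreover have "real n / real k / real n = 1 / real k" using n1 by simp
      ultimately have "1 / real k \<le> real s / real n" by simp
      then show ?thesis unfolding q_def using n1 by (simp add: diff_divide_distrib)
    qed
    have b: "real ((n - i) choose s) \<le> q ^ i * real (n choose s)"
      unfolding q_def using binom_ratio[OF i_n s_le] n1 by simp
    have "q ^ i \<le> (1 - 1 / real k) ^ i" by (rule power_mono[OF q1 q0])
    then have b2: "real ((n - i) choose s) \<le> (1 - 1 / real k) ^ i * real (n choose s)"
    proof -
      have "q ^ i * real (n choose s) \<le> (1 - 1 / real k) ^ i * real (n choose s)"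
        using \<open>q ^ i \<le> (1 - 1 / real k) ^ i\<close> by (rule mult_right_mono) simp
      then show ?thesis using b by linarith
    qed
    have hb: "\<alpha> * real i \<le> 1 - (1 - 1 / real k) ^ i"
      using hit_bound[OF kpos ik] unfolding \<alpha>_def by simp
    have "\<alpha> * real i * real (n choose s) \<le> (1 - (1 - 1 / real k) ^ i) * real (n choose s)"
      using hb by (rule mult_right_mono) simp
    then show "\<alpha> * real (card A) * real (card F) \<le> real (card {Z\<in>F. Z \<inter> A \<noteq> {}})"
      using b2 split cmiss cardF i_def by (simp add: algebra_simps)
  qed
  have main: "\<alpha> * real (card F) * (\<Sum>x\<in>Tp. g x) \<le> (\<Sum>Z\<in>F. Max (insert 0 (g ` (Z \<inter> Tp))))"
    by (rule maxsum[OF finF finTp hit]) (simp add: g_def)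
  have pw: "Max (insert 0 (g ` (Z \<inter> Tp))) \<le> gain Z" if ZF: "Z \<in> F" for Z
  proof -
    have ZN: "Z \<subseteq> N" and cZ: "card Z = s" using ZF F_def by auto
    have finZ: "finite Z" using ZN finN finite_subset by blast
    have Uc: "((Z - S = {} \<or> Max ((\<lambda>x. marg f x S) ` (Z - S)) \<le> 0) \<longrightarrow> U Z = d) \<and>
        (\<not> (Z - S = {} \<or> Max ((\<lambda>x. marg f x S) ` (Z - S)) \<le> 0) \<longrightarrow>
           U Z \<in> Z - S \<and> (\<forall>x\<in>Z - S. marg f x S \<le> marg f (U Z) S))"
      using U_choice ZN cZ s_def by blast
    have g0: "0 \<le> gain Z" unfolding gain_def swap_step_def by auto
    have g1: "f (insert (U Z) (S - {v})) - f S \<le> gain Z" unfolding gain_def swap_step_def by auto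
    have fSv: "f S = f (S - {v}) + m" unfolding m_def marg_def using v_choice
      by (simp add: insert_absorb)
    have each: "g x \<le> gain Z" if x: "x \<in> Z \<inter> Tp" for x
    proof -
      have xZS: "x \<in> Z - S" using x Tp by auto
      have "marg f x S - m \<le> gain Z"
      proof (cases "Z - S = {} \<or> Max ((\<lambda>x. marg f x S) ` (Z - S)) \<le> 0")
        case True
        then have Ud: "U Z = d" using Uc by blast
        have "marg f x S \<le> Max ((\<lambda>x. marg f x S) ` (Z - S))" using xZS finZ by (intro Max_ge) auto
        then have mx: "marg f x S \<le> 0" using True xZS by auto
        have "S - {v} \<subseteq> N" using SN by auto
        then have "f ((S - {v}) \<union> {d}) = f (S - {v})" using dummy by blast
        then have "f (insert d (S - {v})) = f (S - {v})" by simp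
        then show ?thesis using g1 Ud fSv mx by simp
      next
        case False
        then have Uin: "U Z \<in> Z - S" and Umax: "marg f x S \<le> marg f (U Z) S" using Uc xZS by auto
        have UN: "U Z \<in> N" using Uin ZN by auto
        have "f (S \<union> {U Z}) - f S \<le> f ((S - {v}) \<union> {U Z}) - f (S - {v})"
          by (rule sm) (use UN SN Uin in auto)
        then have "marg f (U Z) S - m \<le> f (insert (U Z) (S - {v})) - f S"
          using fSv unfolding marg_def by simp
        then show ?thesis using g1 Umax by linarith
      qed
      then show ?thesis using g0 unfolding g_def by simp
    qed
    show ?thesis
    proof (subst Max_le_iff)
      show "finite (insert 0 (g ` (Z \<inter> Tp)))" using finTp by auto
    qed (use g0 each in auto)
  qed
  have "(\<Sum>Z\<in>F. Max (insert 0 (g ` (Z \<inter> Tp)))) \<le> (\<Sum>Z\<in>F. gain Z)"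
    by (rule sum_mono) (rule pw)
  with main have A: "\<alpha> * real (card F) * (\<Sum>x\<in>Tp. g x) \<le> (\<Sum>Z\<in>F. gain Z)" by linarith
  have cF: "real (card F) > 0" using finF Fne by (simp add: card_gt_0_iff)
  have "\<alpha> * (\<epsilon> * f S) \<le> \<alpha> * (\<Sum>x\<in>Tp. g x)" using gsum alpha_nn by (rule mult_left_mono)
  also have "\<dots> \<le> (\<Sum>Z\<in>F. gain Z) / real (card F)" using A cF by (simp add: field_simps)
  also have "\<dots> = measure_pmf.expectation (pmf_of_set F) gain"
    using integral_pmf_of_set[OF Fne finF] by simp
  finally show ?thesis unfolding F_def s_def gain_def \<alpha>_def by (simp add: algebra_simps)
qed

end
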